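(* Let $\theta:H\to H$ be an endomorphism and $E_1,\dots,E_t$ $n$-ary Endo-primary hyperideals of $H$ associated with $\theta$ such that $rad(E_j)=rad(E_l)$ for all $j,l\in\{1,\dots,t\}$. Then $\bigcap_{j=1}^tE_j$ is an $n$-ary Endo-primary hyperideal of $H$ associated with $\theta$.
   Context: Throughout, $(H,h,k)$ is a commutative Krasner $(m,n)$-hyperring with scalar identity $1_H$: $(H,h)$ is a canonical $m$-ary hypergroup (a commutative associative $m$-ary hyperoperation $h:H^m\to\mathcal P^*(H)$ with a unique zero $0$ such that $h(u,0^{(m-1)})=\{u\}$, unique inverses, reversibility), $k:H^n\to H$ is a commutative associative $n$-ary operation distributing over $h$ in each argument, $k(0,u_2^n)=0$, and $k(u,1_H^{(n-1)})=u$ for all $u$. Notation: $u_i^j$ denotes $u_i,\dots,u_j$ (empty if $j<i$); $u^{(t)}$ denotes $u$ repeated $t$ times; for $r=l(n-1)+1$, $k_{(l)}(u_1^r)=k(k(\cdots k(k(u_1^n),u_{n+1}^{2n-1})\cdots),u_{r-n+1}^{r})$. A hyperideal is a nonempty $I\subseteq H$ such that $(I,h)$ is an $m$-ary subhypergroup and $k(u_1^{i-1},I,u_{i+1}^n)\subseteq I$ for all $u_j\in H$. An endomorphism is a map $\theta$ with $\theta(h(u_1^m))=h(\theta(u_1),\dots,\theta(u_m))$, $\theta(k(u_1^n))=k(\theta(u_1),\dots,\theta(u_n))$, $\theta(1_H)=1_H$. $rad(E)$ is the set of $u$ with $k(u^{(r)},1_H^{(n-r)})\in E$ for some $r\le n$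 or $k_{(l)}(u^{(r)})\in E$ for some $r=l(n-1)+1>n$ (equivalently the intersection of all $n$-ary prime hyperideals containing $E$). A proper hyperideal $E$ is an $n$-ary Endo-primary hyperideal associated with $\theta$ if for all $u_1,\dots,u_n\in H$, $k(u_1^n)\in E$ implies that for some $i$, $u_i\in E$ or $\theta\big(k(u_1^{i-1},1_H,u_{i+1}^n)\big)\in rad(E)$. *)

theory Defs
  imports Main "HOL-Library.Multiset"
begin

text \<open>The hyperring is the whole type 'a. The m-ary hyperoperation h is applied
to lists of length m, the n-ary operation k to lists of length n.
z is the zero of (H,h), e the scalar identity 1_H.\<close>

definition hset :: "('a list \<Rightarrow> 'a set) \<Rightarrow> 'a set list \<Rightarrow> 'a set" where
  "hset h As = \<Union> {h xs | xs. list_all2 (\<in>) xs As}"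

definition hinv :: "nat \<Rightarrow> ('a list \<Rightarrow> 'a set) \<Rightarrow> 'a \<Rightarrow> 'a \<Rightarrow> 'a" where
  "hinv m h z x = (THE y. z \<in> h (x # y # replicate (m - 2) z))"

definition canonical_hypergroup :: "nat \<Rightarrow> ('a list \<Rightarrow> 'a set) \<Rightarrow> 'a \<Rightarrow> bool" where
  "canonical_hypergroup m h z \<longleftrightarrow>
     m \<ge> 2 \<and>
     (\<forall>xs. length xs = m \<longrightarrow> h xs \<noteq> {}) \<and>
     (\<forall>xs i j. length xs = 2 * m - 1 \<and> i < m \<and> j < m \<longrightarrow>
        hset h (map (\<lambda>x. {x}) (take i xs) @ [h (take m (drop i xs))] @ map (\<lambda>x. {x}) (drop (i + m) xs))
      = hset h (map (\<lambda>x. {x}) (take j xs) @ [h (take m (drop j xs))] @ map (\<lambda>x. {x}) (drop (j + m) xs))) \<and>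
     (\<forall>xs ys. length xs = m \<and> mset xs = mset ys \<longrightarrow> h xs = h ys) \<and>
     (\<forall>x. h (x # replicate (m - 1) z) = {x}) \<and>
     (\<forall>z'. (\<forall>x. h (x # replicate (m - 1) z') = {x}) \<longrightarrow> z' = z) \<and>
     (\<forall>x. \<exists>!y. z \<in> h (x # y # replicate (m - 2) z)) \<and>
     (\<forall>x xs i. length xs = m \<and> i < m \<and> x \<in> h xs \<longrightarrow>
        xs ! i \<in> h ((map (hinv m h z) xs)[i := x]))"

definition krasner_hyperring ::
  "nat \<Rightarrow> nat \<Rightarrow> ('a list \<Rightarrow> 'a set) \<Rightarrow> ('a list \<Rightarrow> 'a) \<Rightarrow> 'a \<Rightarrow> 'a \<Rightarrow> bool" where
  "krasner_hyperring m n h k z e \<longleftrightarrow>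
     canonical_hypergroup m h z \<and> n \<ge> 2 \<and>
     (\<forall>xs i j. length xs = 2 * n - 1 \<and> i < n \<and> j < n \<longrightarrow>
        k (take i xs @ [k (take n (drop i xs))] @ drop (i + n) xs)
      = k (take j xs @ [k (take n (drop j xs))] @ drop (j + n) xs)) \<and>
     (\<forall>xs ys. length xs = n \<and> mset xs = mset ys \<longrightarrow> k xs = k ys) \<and>
     (\<forall>xs ys i. length xs = n \<and> length ys = m \<and> i < n \<longrightarrow>
        (\<lambda>y. k (xs[i := y])) ` h ys = h (map (\<lambda>y. k (xs[i := y])) ys)) \<and>
     (\<forall>xs. length xs = n - 1 \<longrightarrow> k (z # xs) = z) \<and>
     (\<forall>x. k (x # replicate (n - 1) e) = x)"

definition hyperideal ::
  "nat \<Rightarrow> nat \<Rightarrow> ('a list \<Rightarrow> 'a set) \<Rightarrow> ('a list \<Rightarrow> 'a) \<Rightarrow> 'a \<Rightarrow> 'a set \<Rightarrow> bool" where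
  "hyperideal m n h k z I \<longleftrightarrow>
     I \<noteq> {} \<and>
     (\<forall>xs. length xs = m \<and> set xs \<subseteq> I \<longrightarrow> h xs \<subseteq> I) \<and>
     (\<forall>x\<in>I. hinv m h z x \<in> I) \<and>
     (\<forall>xs i. length xs = n \<and> i < n \<and> xs ! i \<in> I \<longrightarrow> k xs \<in> I)"

definition endomorphism ::
  "nat \<Rightarrow> nat \<Rightarrow> ('a list \<Rightarrow> 'a set) \<Rightarrow> ('a list \<Rightarrow> 'a) \<Rightarrow> 'a \<Rightarrow> ('a \<Rightarrow> 'a) \<Rightarrow> bool" where
  "endomorphism m n h k e \<theta> \<longleftrightarrow>
     (\<forall>xs. length xs = m \<longrightarrow> \<theta> ` h xs = h (map \<theta> xs)) \<and>
     (\<forall>xs. length xs = n \<longrightarrow> \<theta> (k xs) = k (map \<theta> xs)) \<and>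
     \<theta> e = e"

text \<open>k_(l)(u_1^r) for r = l(n-1)+1 (k_(0) of a single element is that element).\<close>
fun kl :: "nat \<Rightarrow> ('a list \<Rightarrow> 'a) \<Rightarrow> nat \<Rightarrow> 'a list \<Rightarrow> 'a" where
  "kl n k 0 xs = hd xs"
| "kl n k (Suc l) xs =
     k (kl n k l (take (length xs - (n - 1)) xs) # drop (length xs - (n - 1)) xs)"

definition hrad :: "nat \<Rightarrow> ('a list \<Rightarrow> 'a) \<Rightarrow> 'a \<Rightarrow> 'a set \<Rightarrow> 'a set" where
  "hrad n k e E = {u. (\<exists>r. 1 \<le> r \<and> r \<le> n \<and> k (replicate r u @ replicate (n - r) e) \<in> E)
                   \<or> (\<exists>l. l * (n - 1) + 1 > n \<and> kl n k l (replicate (l * (n - 1) + 1) u) \<in> E)}"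

definition endo_primary ::
  "nat \<Rightarrow> nat \<Rightarrow> ('a list \<Rightarrow> 'a set) \<Rightarrow> ('a list \<Rightarrow> 'a) \<Rightarrow> 'a \<Rightarrow> 'a \<Rightarrow> ('a \<Rightarrow> 'a) \<Rightarrow> 'a set \<Rightarrow> bool" where
  "endo_primary m n h k z e \<theta> E \<longleftrightarrow>
     hyperideal m n h k z E \<and> E \<noteq> UNIV \<and>
     (\<forall>us. length us = n \<and> k us \<in> E \<longrightarrow>
        (\<exists>i<n. us ! i \<in> E \<or> \<theta> (k (us[i := e])) \<in> hrad n k e E))"

end

theory Submission
  imports Defs
begin

locale KH =
  fixes m n :: nat and h :: "'a list \<Rightarrow> 'a set" and k :: "'a list \<Rightarrow> 'a" and z e :: 'a and N :: nat
  assumes KR: "krasner_hyperring m n h k z e" and nN: "n = Suc (Suc N)"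
begin

lemma n2: "n \<ge> 2" using KR unfolding krasner_hyperring_def by blast

lemma assoc_ax: "length xs = 2*n-1 \<Longrightarrow> i<n \<Longrightarrow> j<n \<Longrightarrow>
   k (take i xs @ [k (take n (drop i xs))] @ drop (i + n) xs)
 = k (take j xs @ [k (take n (drop j xs))] @ drop (j + n) xs)"
  using KR unfolding krasner_hyperring_def by blast

lemma comm_ax: "length xs = n \<Longrightarrow> mset xs = mset ys \<Longrightarrow> k xs = k ys"
  using KR unfolding krasner_hyperring_def by blast

lemma zero_ax: "length xs = n - 1 \<Longrightarrow> k (z # xs) = z"
  using KR unfolding krasner_hyperring_def by blast

lemma id_ax: "k (x # replicate (n - 1) e) = x"
  using KR unfolding krasner_hyperring_def by blast


definition mul where "mul x y = k (x # y # replicate N e)"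

lemma mul_e: "mul x e = x" unfolding mul_def using id_ax[of x] by (simp add: nN)

lemma mul_comm: "mul x y = mul y x" unfolding mul_def
  by (rule comm_ax) (simp_all add: nN add_mset_commute)

lemma e_mul: "mul e x = x" using mul_e mul_comm by metis

lemma mul_assoc: "mul (mul x y) w = mul x (mul y w)"
proof -
  let ?L = "x # y # replicate N e @ w # replicate N e"
  have len: "length ?L = 2*n-1" by (simp add: nN)
  have "k (take 0 ?L @ [k (take n (drop 0 ?L))] @ drop (0+n) ?L) = k (take 1 ?L @ [k (take n (drop 1 ?L))] @ drop (1+n) ?L)"
    by (rule assoc_ax[OF len]) (simp_all add: nN)
  moreover have "take n ?L = x # y # replicate N e" by (simp add: nN)
  moreover have "drop n ?L = w # replicate N e" by (simp add: nN)
  moreover have "take n (drop 1 ?L) = y # replicate N e @ [w]" by (simp add: nN)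
  moreover have "drop (1+n) ?L = replicate N e" by (simp add: nN)
  moreover have "k (y # replicate N e @ [w]) = mul y w" unfolding mul_def
    by (rule comm_ax) (simp_all add: nN)
  ultimately show ?thesis unfolding mul_def by simp
qed

definition lprod where "lprod xs = foldr mul xs e"
definition pw where "pw x r = lprod (replicate r x)"

lemma lprod_Nil[simp]: "lprod [] = e" by (simp add: lprod_def)
lemma lprod_Cons[simp]: "lprod (x # xs) = mul x (lprod xs)" by (simp add: lprod_def)

lemma k_pad: "length xs \<le> n \<Longrightarrow> k (xs @ replicate (n - length xs) e) = lprod xs"
proof (induction xs)
  case Nil
  then show ?case using id_ax[of e] by (simp add: nN)
next
  case (Cons x xs)
  let ?l = "length xs"
  have lt: "?l < n" using Cons.prems by simp
  have IH: "k (xs @ replicate (n - ?l) e) = lprod xs" using Cons lt by simp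
  let ?L = "x # xs @ replicate (n - ?l) e @ replicate N e"
  have len: "length ?L = 2*n-1" using lt by (simp add: nN)
  have A: "k (take 0 ?L @ [k (take n (drop 0 ?L))] @ drop (0+n) ?L) = k (take 1 ?L @ [k (take n (drop 1 ?L))] @ drop (1+n) ?L)"
    by (rule assoc_ax[OF len]) (simp_all add: nN)
  have r1: "replicate (n - ?l) e = replicate (n - Suc ?l) e @ [e]" using lt
    by (metis Suc_diff_Suc replicate_Suc replicate_append_same)
  have t1: "take n ?L = x # xs @ replicate (n - Suc ?l) e" using lt
    by (simp add: r1 nN)
  have d1: "drop n ?L = e # replicate N e" using lt by (simp add: r1 nN)
  have t2: "take n (drop 1 ?L) = xs @ replicate (n - ?l) e" using lt by simp
  have d2: "drop (1+n) ?L = replicate N e" using lt by simp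
  have B: "k (k (take n ?L) # drop n ?L) = k (x # xs @ replicate (n - Suc ?l) e)"
    unfolding t1 d1 using id_ax[of "k (x # xs @ replicate (n - Suc ?l) e)"] by (simp add: nN)
  have "k (x # xs @ replicate (n - length (x # xs)) e) = k (k (take n ?L) # drop n ?L)"
    using B by simp
  also have "\<dots> = k (x # k (xs @ replicate (n - ?l) e) # replicate N e)"
    using A unfolding t2 d2 by simp
  also have "\<dots> = lprod (x # xs)" using IH by (simp add: mul_def)
  finally show ?case by simp
qed

lemma k_prod: "length xs = n \<Longrightarrow> k xs = lprod xs"
  using k_pad[of xs] by simp

lemma lprod_append: "lprod (xs @ ys) = mul (lprod xs) (lprod ys)"
  by (induction xs) (simp_all add: e_mul mul_assoc)

lemma pw_add: "pw x (a+b) = mul (pw x a) (pw x b)"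
  by (simp add: pw_def replicate_add lprod_append)

lemma pw_Suc: "pw x (Suc r) = mul x (pw x r)" by (simp add: pw_def)
lemma pw_0: "pw x 0 = e" by (simp add: pw_def)
lemma pw_1: "pw x 1 = x" by (simp add: pw_def mul_e)

lemma mul_ac: "mul (mul a b) (mul c d) = mul (mul a c) (mul b d)"
  by (metis mul_assoc mul_comm)

lemma pw_mul: "pw (mul u v) r = mul (pw u r) (pw v r)"
  by (induction r) (simp_all add: pw_Suc pw_0 mul_e mul_ac)

lemma pw_pw: "pw x (s*R) = pw (pw x s) R"
proof (induction R)
  case 0 then show ?case by (simp add: pw_0)
next
  case (Suc R)
  have "s * Suc R = s + s*R" by simp
  then show ?case using Suc by (simp add: pw_add pw_Suc)
qed

lemma lprod_nth: "i < length xs \<Longrightarrow> lprod xs = mul (xs!i) (lprod (xs[i:=e]))"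
proof (induction xs arbitrary: i)
  case Nil then show ?case by simp
next
  case (Cons x xs)
  show ?case
  proof (cases i)
    case 0 then show ?thesis by (simp add: e_mul)
  next
    case (Suc j)
    then have "lprod xs = mul (xs!j) (lprod (xs[j:=e]))" using Cons by simp
    then show ?thesis using Suc by (simp, metis mul_assoc mul_comm)
  qed
qed

lemma lprod_rep_e: "lprod (replicate r e) = e"
  by (induction r) (simp_all add: e_mul)

lemma kl_pw: "kl n k l (replicate (l*(n-1)+1) u) = pw u (l*(n-1)+1)"
proof (induction l)
  case 0 then show ?case by (simp add: pw_def mul_e)
next
  case (Suc l)
  have e1: "Suc l * (n - 1) + 1 - (n - 1) = l*(n-1)+1" by simp
  have "kl n k (Suc l) (replicate (Suc l*(n-1)+1) u)
     = k (pw u (l*(n-1)+1) # replicate (n-1) u)"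
    using Suc by (simp only: kl.simps length_replicate e1 take_replicate drop_replicate) simp
  also have "\<dots> = mul (pw u (l*(n-1)+1)) (pw u (n-1))"
    using n2 by (subst k_prod) (simp_all add: pw_def)
  also have "\<dots> = pw u (l*(n-1)+1 + (n-1))" by (simp only: pw_add)
  also have "\<dots> = pw u (Suc l*(n-1)+1)"
    by (metis (no_types) add.commute add.left_commute mult_Suc)
  finally show ?case .
qed

context
  fixes I assumes HI: "hyperideal m n h k z I"
begin

lemma ideal_k: "length xs = n \<Longrightarrow> i < n \<Longrightarrow> xs!i \<in> I \<Longrightarrow> k xs \<in> I"
  using HI unfolding hyperideal_def by blast

lemma mul_inL: "x \<in> I \<Longrightarrow> mul x y \<in> I"
  unfolding mul_def by (rule ideal_k[of _ 0]) (simp_all add: nN)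

lemma mul_inR: "y \<in> I \<Longrightarrow> mul x y \<in> I"
  using mul_inL mul_comm by metis

lemma z_in: "z \<in> I"
proof -
  obtain x where "x \<in> I" using HI unfolding hyperideal_def by blast
  then have "mul z x \<in> I" by (rule mul_inR)
  moreover have "mul z x = z" unfolding mul_def by (rule zero_ax) (simp add: nN)
  ultimately show ?thesis by simp
qed

lemma e_notin: "I \<noteq> UNIV \<Longrightarrow> e \<notin> I"
  using mul_inL e_mul by (metis UNIV_eq_I)

lemma pw_mono: "pw u r \<in> I \<Longrightarrow> r \<le> s \<Longrightarrow> pw u s \<in> I"
  using pw_add[of u r "s - r"] mul_inL by (metis le_add_diff_inverse)

lemma pad_pw: "r \<le> n \<Longrightarrow> k (replicate r u @ replicate (n - r) e) = pw u r"
  using k_pad[of "replicate r u"] by (simp add: pw_def)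

lemma hrad_char: "u \<in> hrad n k e I \<longleftrightarrow> (\<exists>r\<ge>1. pw u r \<in> I)"
proof
  assume "u \<in> hrad n k e I"
  then consider (a) r where "1 \<le> r" "r \<le> n" "k (replicate r u @ replicate (n - r) e) \<in> I"
    | (b) l where "l * (n - 1) + 1 > n" "kl n k l (replicate (l * (n - 1) + 1) u) \<in> I"
    unfolding hrad_def by blast
  then show "\<exists>r\<ge>1. pw u r \<in> I"
  proof cases
    case a
    then have "pw u r \<in> I" using pad_pw[of r u] by simp
    then show ?thesis using a(1) by blast
  next
    case b
    then have "pw u (l * (n - 1) + 1) \<in> I" using kl_pw[of l u] by simp
    then show ?thesis by (intro exI[of _ "l * (n - 1) + 1"]) simp
  qed
next
  assume "\<exists>r\<ge>1. pw u r \<in> I"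
  then obtain r where r: "r \<ge> 1" "pw u r \<in> I" by blast
  show "u \<in> hrad n k e I"
  proof (cases "r \<le> n")
    case True
    then have "k (replicate r u @ replicate (n - r) e) \<in> I" using r pad_pw[of r u] by simp
    then show ?thesis unfolding hrad_def using r(1) True by blast
  next
    case False
    have "1 \<le> n - 1" using n2 by simp
    then have "r * 1 \<le> r * (n - 1)" by (rule mult_le_mono2)
    then have le: "r \<le> r * (n - 1)" by simp
    then have "pw u (r * (n - 1) + 1) \<in> I" using pw_mono[OF r(2), of "r * (n - 1) + 1"] by linarith
    then have "kl n k r (replicate (r * (n - 1) + 1) u) \<in> I" using kl_pw[of r u] by simp
    moreover have "r * (n - 1) + 1 > n" using False le by linarith
    ultimately show ?thesis unfolding hrad_def by blast
  qed
qed

lemma sub_hrad: "x \<in> I \<Longrightarrow> x \<in> hrad n k e I"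
  using hrad_char[of x] pw_1[of x] by (metis order_refl)

lemma hrad_mul: "u \<in> hrad n k e I \<Longrightarrow> mul u v \<in> hrad n k e I"
proof -
  assume "u \<in> hrad n k e I"
  then obtain r where r: "r \<ge> 1" "pw u r \<in> I" using hrad_char by blast
  then have "pw (mul u v) r \<in> I" using pw_mul[of u v r] mul_inL by simp
  then show ?thesis using hrad_char r(1) by blast
qed

lemma hrad_pw: "s \<ge> 1 \<Longrightarrow> pw x s \<in> hrad n k e I \<Longrightarrow> x \<in> hrad n k e I"
proof -
  assume s: "s \<ge> 1" and "pw x s \<in> hrad n k e I"
  then obtain R where R: "R \<ge> 1" "pw (pw x s) R \<in> I" using hrad_char by blast
  then have "pw x (s*R) \<in> I" by (simp add: pw_pw)
  moreover have "s * R \<ge> 1" using s R(1) by simp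
  ultimately show ?thesis using hrad_char by blast
qed

end

end


lemma (in KH) theta_mul: "endomorphism m n h k e \<theta> \<Longrightarrow> \<theta> (mul x y) = mul (\<theta> x) (\<theta> y)"
  unfolding endomorphism_def mul_def by (simp add: nN)

lemma (in KH) theta_pw: "endomorphism m n h k e \<theta> \<Longrightarrow> \<theta> (pw x r) = pw (\<theta> x) r"
proof (induction r)
  case 0 then show ?case by (simp add: pw_0 endomorphism_def)
next
  case (Suc r) then show ?case by (simp add: pw_Suc theta_mul)
qed

theorem mainTheorem19:
  fixes h :: "'a list \<Rightarrow> 'a set" and k :: "'a list \<Rightarrow> 'a"
    and z e :: 'a and \<theta> :: "'a \<Rightarrow> 'a" and E :: "nat \<Rightarrow> 'a set" and t m n :: nat
  assumes "krasner_hyperring m n h k z e"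
    and "endomorphism m n h k e \<theta>"
    and "t \<ge> 1"
    and "\<forall>j\<in>{1..t}. endo_primary m n h k z e \<theta> (E j)"
    and "\<forall>j\<in>{1..t}. \<forall>l\<in>{1..t}. hrad n k e (E j) = hrad n k e (E l)"
  shows "endo_primary m n h k z e \<theta> (\<Inter>j\<in>{1..t}. E j)"
proof -
  obtain N where nN: "n = Suc (Suc N)"
    using assms(1) unfolding krasner_hyperring_def by (metis add_2_eq_Suc le_Suc_ex)
  interpret KH m n h k z e N by (rule KH.intro) (rule assms(1), rule nN)
  define P where "P = hrad n k e (E 1)"
  have t1: "1 \<in> {1..t}" using assms(3) by simp
  have EP: "\<And>j. j\<in>{1..t} \<Longrightarrow> endo_primary m n h k z e \<theta> (E j)" using assms(4) by blast
  have HI: "\<And>j. j\<in>{1..t} \<Longrightarrow> hyperideal m n h k z (E j)" using EP unfolding endo_primary_def by blast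
  have RP: "\<And>j. j\<in>{1..t} \<Longrightarrow> hrad n k e (E j) = P" using assms(5) t1 P_def by blast
  define EE where "EE = (\<Inter>j\<in>{1..t}. E j)"
  have EE1: "EE \<subseteq> E 1" using t1 EE_def by blast
  have HIE: "hyperideal m n h k z EE"
  proof -
    have A: "\<And>j xs. j\<in>{1..t} \<Longrightarrow> length xs = m \<Longrightarrow> set xs \<subseteq> E j \<Longrightarrow> h xs \<subseteq> E j"
      using HI unfolding hyperideal_def by blast
    have B: "\<And>j x. j\<in>{1..t} \<Longrightarrow> x \<in> E j \<Longrightarrow> hinv m h z x \<in> E j"
      using HI unfolding hyperideal_def by blast
    have C: "\<And>j xs i. j\<in>{1..t} \<Longrightarrow> length xs = n \<Longrightarrow> i < n \<Longrightarrow> xs ! i \<in> E j \<Longrightarrow> k xs \<in> E j"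
      using HI unfolding hyperideal_def by blast
    have D: "z \<in> EE" unfolding EE_def using z_in[OF HI] by blast
    show ?thesis unfolding hyperideal_def
    proof (intro conjI allI impI ballI)
      show "EE \<noteq> {}" using D by blast
    next
      fix xs assume "length xs = m \<and> set xs \<subseteq> EE"
      then show "h xs \<subseteq> EE" unfolding EE_def using A by blast
    next
      fix x assume "x \<in> EE"
      then show "hinv m h z x \<in> EE" unfolding EE_def using B by blast
    next
      fix xs i assume "length xs = n \<and> i < n \<and> xs ! i \<in> EE"
      then show "k xs \<in> EE" unfolding EE_def using C by blast
    qed
  qed
  have properE: "EE \<noteq> UNIV" using EE1 EP[OF t1] unfolding endo_primary_def by blast
  have RE: "hrad n k e EE = P"
  proof
    show "hrad n k e EE \<subseteq> P"
    proof
      fix u assume "u \<in> hrad n k e EE"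
      then obtain r where "r \<ge> 1" "pw u r \<in> EE" using hrad_char[OF HIE] by blast
      then show "u \<in> P" unfolding P_def using hrad_char[OF HI[OF t1]] EE1 by blast
    qed
  next
    show "P \<subseteq> hrad n k e EE"
    proof
      fix u assume uP: "u \<in> P"
      have "\<forall>j\<in>{1..t}. \<exists>r. r \<ge> 1 \<and> pw u r \<in> E j"
        using uP RP hrad_char[OF HI] by blast
      then obtain f where f: "\<forall>j\<in>{1..t}. f j \<ge> 1 \<and> pw u (f j) \<in> E j"
        by metis
      define R where "R = Max (f ` {1..t})"
      have fR: "\<And>j. j \<in> {1..t} \<Longrightarrow> f j \<le> R" unfolding R_def by simp
      have R1: "R \<ge> 1" using fR[OF t1] f t1 by fastforce
      have "pw u R \<in> EE" unfolding EE_def using f fR pw_mono[OF HI] by blast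
      then show "u \<in> hrad n k e EE" using hrad_char[OF HIE] R1 by blast
    qed
  qed
  show ?thesis
    unfolding endo_primary_def EE_def[symmetric]
  proof (intro conjI HIE properE allI impI)
    fix us assume us: "length us = n \<and> k us \<in> EE"
    show "\<exists>i<n. us ! i \<in> EE \<or> \<theta> (k (us[i := e])) \<in> hrad n k e EE"
    proof (rule ccontr)
      assume H: "\<not> ?thesis"
      have H1: "\<And>i. i<n \<Longrightarrow> us!i \<notin> EE" using H by blast
      have H2: "\<And>i. i<n \<Longrightarrow> \<theta> (k (us[i:=e])) \<notin> P" using H RE by blast
      have "k us \<in> E 1" using us EE1 by blast
      then obtain i1 where i1: "i1<n" "us!i1 \<in> E 1 \<or> \<theta> (k (us[i1:=e])) \<in> hrad n k e (E 1)"
        using EP[OF t1] us unfolding endo_primary_def by blast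
      define a where "a = us!i1"
      have a1: "a \<in> E 1" using i1 H2 P_def a_def by blast
      from H1[OF i1(1)] obtain l where l: "l\<in>{1..t}" "a \<notin> E l" unfolding EE_def a_def by blast
      have aP: "a \<in> hrad n k e (E l)" using sub_hrad[OF HI[OF t1] a1] RP[OF t1] RP[OF l(1)] by simp
      then obtain r where r: "r\<ge>1" "pw a r \<in> E l" using hrad_char[OF HI[OF l(1)]] by blast
      define r0 where "r0 = (LEAST r. pw a r \<in> E l)"
      have r0in: "pw a r0 \<in> E l" unfolding r0_def by (rule LeastI[of _ r]) (rule r(2))
      have r0min: "\<And>s. s < r0 \<Longrightarrow> pw a s \<notin> E l" unfolding r0_def using not_less_Least by blast
      have eE: "e \<notin> E l" using e_notin[OF HI[OF l(1)]] EP[OF l(1)] unfolding endo_primary_def by blast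
      have "r0 \<noteq> 0"
      proof
        assume "r0 = 0" then show False using r0in eE pw_0[of a] by simp
      qed
      moreover have "r0 \<noteq> 1" using r0in l(2) pw_1[of a] by auto
      ultimately obtain s where s: "r0 = Suc s" "s \<ge> 1" by (cases r0) auto
      have sn: "pw a s \<notin> E l" using r0min s by simp
      define vs where "vs = a # pw a s # replicate N e"
      have lv: "length vs = n" unfolding vs_def by (simp add: nN)
      have kv: "k vs = pw a r0" using k_prod[OF lv]
        unfolding vs_def by (simp add: lprod_rep_e mul_e s pw_Suc)
      from EP[OF l(1)] lv kv r0in obtain i where i: "i<n" "vs!i \<in> E l \<or> \<theta> (k (vs[i:=e])) \<in> hrad n k e (E l)"
        unfolding endo_primary_def by metis
      have "vs!i \<notin> E l"
      proof (cases i)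
        case 0 then show ?thesis using l(2) vs_def by simp
      next
        case (Suc i2)
        show ?thesis
        proof (cases i2)
          case 0 then show ?thesis using sn vs_def Suc by simp
        next
          case (Suc i3)
          then have "vs!i = e" using \<open>i = Suc i2\<close> i(1) unfolding vs_def by (simp add: nN)
          then show ?thesis using eE by simp
        qed
      qed
      then have th: "\<theta> (k (vs[i:=e])) \<in> P" using i RP[OF l(1)] by simp
      have "\<exists>s'\<ge>1. k (vs[i:=e]) = pw a s'"
      proof (cases i)
        case 0
        have "k (vs[i:=e]) = lprod (vs[i:=e])" using lv by (intro k_prod) simp
        also have "\<dots> = pw a s" using 0 unfolding vs_def by (simp add: lprod_rep_e mul_e e_mul)
        finally show ?thesis using s by blast
      next
        case (Suc i2)
        show ?thesis
        proof (cases i2)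
          case 0
          have "k (vs[i:=e]) = lprod (vs[i:=e])" using lv by (intro k_prod) simp
          also have "\<dots> = pw a 1" using 0 Suc unfolding vs_def by (simp add: lprod_rep_e mul_e e_mul pw_def)
          finally show ?thesis by blast
        next
          case (Suc i3)
          then have "vs!i = e" using \<open>i = Suc i2\<close> i(1) unfolding vs_def by (simp add: nN)
          then have "vs[i:=e] = vs" by (metis list_update_id)
          then show ?thesis using kv s by auto
        qed
      qed
      then obtain s' where s': "s' \<ge> 1" "k (vs[i:=e]) = pw a s'" by blast
      have "pw (\<theta> a) s' \<in> P" using th s' theta_pw[OF assms(2)] by simp
      then have thaP: "\<theta> a \<in> P" unfolding P_def using hrad_pw[OF HI[OF t1] s'(1)] by blast
      define i' where "i' = (if i1 = 0 then 1 else (0::nat))"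
      have i': "i' < n" "i' \<noteq> i1" unfolding i'_def using n2 by auto
      define xs where "xs = us[i':=e]"
      have lx: "length xs = n" unfolding xs_def using us by simp
      have xa: "xs!i1 = a" unfolding xs_def a_def using i' i1(1) us by simp
      have "k xs = mul a (lprod (xs[i1:=e]))" using k_prod[OF lx] lprod_nth[of i1 xs] lx i1(1) xa by simp
      then have "\<theta> (k xs) = mul (\<theta> a) (\<theta> (lprod (xs[i1:=e])))" using theta_mul[OF assms(2)] by simp
      then have "\<theta> (k xs) \<in> P" using hrad_mul[OF HI[OF t1]] thaP P_def by simp
      then show False using H2[OF i'(1)] xs_def by simp
    qed
  qed
qed

end
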